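(* Let $\mathbf{n}=(n_0,\dots,n_L)$ and $\mathbf{A}=(A_1,\dots,A_L)\in\mathsf{Param}(\mathbf{n})$ (merged notation), and let $\mathbf{Q}=(Q_1,\dots,Q_{L-1})$ be the tuple of orthogonal matrices produced by the QR compression algorithm applied to $\mathbf{A}$. Then $\mathbf{Q}^{-1}\cdot\mathbf{A}$ belongs to $\mathsf{Param}^{\rm int}(\mathbf{n})$.
   Context: Merged notation: $\mathsf{Param}(\mathbf{n})=\prod_{i=1}^L\mathbb{R}^{n_i\times(n_{i-1}+1)}$, where $A_i=[\,b_i\ W_i\,]$ combines bias $b_i\in\mathbb{R}^{n_i}$ and weights $W_i\in\mathbb{R}^{n_i\times n_{i-1}}$. Reduced widths: $n^{\rm red}_0=n_0$, $n^{\rm red}_i=\min(n_i,n^{\rm red}_{i-1}+1)$ for $1\le i\le L-1$, $n^{\rm red}_L=n_L$. The group $O(n_1)\times\dots\times O(n_{L-1})$ acts by $\mathbf{Q}\cdot\mathbf{A}=\big(Q_iA_i\begin{bmatrix}1&0\\0&Q_{i-1}^{-1}\end{bmatrix}\big)_{i=1}^L$, with $Q_0=\mathrm{id}_{n_0}$, $Q_L=\mathrm{id}_{n_L}$. $\mathsf{Param}^{\rm int}(\mathbf{n})$ is the subspace of $\mathbf{T}=(T_i)\in\mathsf{Param}(\mathbf{n})$ such that for each $i$ the bottom-left $(n_i-n^{\rm red}_i)\times(1+n^{\rm red}_{i-1})$ block of $T_i$ is zero. QR compression algorithm: $M_1=A_1$; for $i=1,\dots,L-1$: compute a complete QR decomposition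 $M_i=Q_i\,\mathrm{inc}_i\,R_i$ with $Q_i\in O(n_i)$, $R_i$ upper triangular of size $n^{\rm red}_i\times(1+n^{\rm red}_{i-1})$ and $\mathrm{inc}_i:\mathbb{R}^{n^{\rm red}_i}\hookrightarrow\mathbb{R}^{n_i}$ the inclusion into the first coordinates; record $Q_i$ and $R_i$; set $M_{i+1}=A_{i+1}\begin{bmatrix}1&0\\0&Q_i\,\mathrm{inc}_i\end{bmatrix}$. The output is $\mathbf{Q}=(Q_i)$ and $\mathbf{V}=(R_1,\dots,R_{L-1},M_L)$. *)

theory Defs
  imports "Jordan_Normal_Form.Matrix"
begin

text \<open>Widths are a list n = [n_0, ..., n_L]; L = length n - 1.
  Layer matrices and orthogonal matrices are indexed by nat (A i for 1 <= i <= L,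
  Q i for 1 <= i <= L-1).\<close>

definition depth :: "nat list \<Rightarrow> nat" where
  "depth ns = length ns - 1"

fun nred_aux :: "nat list \<Rightarrow> nat \<Rightarrow> nat" where
  "nred_aux ns 0 = ns ! 0"
| "nred_aux ns (Suc i) = min (ns ! Suc i) (nred_aux ns i + 1)"

definition nred :: "nat list \<Rightarrow> nat \<Rightarrow> nat" where
  "nred ns i = (if i = depth ns then ns ! i else nred_aux ns i)"

definition Param :: "nat list \<Rightarrow> (nat \<Rightarrow> real mat) set" where
  "Param ns = {A. \<forall>i\<in>{1..depth ns}. A i \<in> carrier_mat (ns ! i) (ns ! (i - 1) + 1)}"

definition orth_group :: "nat \<Rightarrow> real mat set" where
  "orth_group k = {Q. Q \<in> carrier_mat k k \<and> transpose_mat Q * Q = 1\<^sub>m k}"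

definition one_plus :: "real mat \<Rightarrow> real mat" where
  "one_plus B = mat (dim_row B + 1) (dim_col B + 1)
     (\<lambda>(r, c). if r = 0 \<and> c = 0 then 1 else if r = 0 \<or> c = 0 then 0 else B $$ (r - 1, c - 1))"

definition inc :: "nat \<Rightarrow> nat \<Rightarrow> real mat" where
  "inc k m = mat k m (\<lambda>(r, c). if r = c then 1 else 0)"

definition Qext :: "nat list \<Rightarrow> (nat \<Rightarrow> real mat) \<Rightarrow> nat \<Rightarrow> real mat" where
  "Qext ns Q i = (if i = 0 \<or> i = depth ns then 1\<^sub>m (ns ! i) else Q i)"

definition orth_inv :: "real mat \<Rightarrow> real mat" where
  "orth_inv Q = transpose_mat Q"

definition act :: "nat list \<Rightarrow> (nat \<Rightarrow> real mat) \<Rightarrow> (nat \<Rightarrow> real mat) \<Rightarrow> (nat \<Rightarrow> real mat)" where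
  "act ns Q A = (\<lambda>i. Qext ns Q i * A i * one_plus (orth_inv (Qext ns Q (i - 1))))"

definition grp_inv :: "(nat \<Rightarrow> real mat) \<Rightarrow> (nat \<Rightarrow> real mat)" where
  "grp_inv Q = (\<lambda>i. orth_inv (Q i))"

definition Param_int :: "nat list \<Rightarrow> (nat \<Rightarrow> real mat) set" where
  "Param_int ns = {T. T \<in> Param ns \<and>
     (\<forall>i\<in>{1..depth ns}. \<forall>r c. nred ns i \<le> r \<and> r < ns ! i \<and> c < 1 + nred ns (i - 1)
         \<longrightarrow> T i $$ (r, c) = 0)}"

fun qrM :: "nat list \<Rightarrow> (nat \<Rightarrow> real mat) \<Rightarrow> (nat \<Rightarrow> real mat) \<Rightarrow> nat \<Rightarrow> real mat" where
  "qrM ns A Q 0 = A 0"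
| "qrM ns A Q (Suc 0) = A 1"
| "qrM ns A Q (Suc (Suc k)) =
     A (k + 2) * one_plus (Q (k + 1) * inc (ns ! (k + 1)) (nred ns (k + 1)))"

text \<open>(Q, R) is a possible run of the QR compression algorithm on A (any choice of
  complete QR decompositions at each step).\<close>
definition qr_run :: "nat list \<Rightarrow> (nat \<Rightarrow> real mat) \<Rightarrow> (nat \<Rightarrow> real mat) \<Rightarrow> (nat \<Rightarrow> real mat) \<Rightarrow> bool" where
  "qr_run ns A Q R \<longleftrightarrow>
     (\<forall>i\<in>{1..<depth ns}.
        Q i \<in> orth_group (ns ! i) \<and>
        R i \<in> carrier_mat (nred ns i) (1 + nred ns (i - 1)) \<and>
        upper_triangular (R i) \<and>
        qrM ns A Q i = Q i * inc (ns ! i) (nred ns i) * R i)"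

end

theory Submission
  imports Defs
begin

lemma one_plus_carrier: "one_plus B \<in> carrier_mat (dim_row B + 1) (dim_col B + 1)"
  unfolding one_plus_def by simp

lemma one_plus_one: "one_plus (1\<^sub>m n) = 1\<^sub>m (n + 1)"
  unfolding one_plus_def by (rule eq_matI) auto

lemma mult_inc_entry:
  assumes "P \<in> carrier_mat a n" "m \<le> n" "x < a" "y < m"
  shows "(P * inc n m) $$ (x, y) = P $$ (x, y)"
proof -
  have "(P * inc n m) $$ (x, y) = (\<Sum>j<n. P $$ (x, j) * (if j = y then 1 else 0))"
    using assms by (simp add: inc_def scalar_prod_def lessThan_atLeast0)
  also have "\<dots> = P $$ (x, y)"
    using assms by (simp add: if_distrib cong: if_cong)
  finally show ?thesis .
qed

lemma one_plus_inc_entry: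
  assumes X: "X \<in> carrier_mat a (n + 1)" and P: "P \<in> carrier_mat n n"
    and "m \<le> n" "r < a" "c < m + 1"
  shows "(X * one_plus P) $$ (r, c) = (X * one_plus (P * inc n m)) $$ (r, c)"
proof -
  have ci: "P * inc n m \<in> carrier_mat n m" using P by (simp add: inc_def)
  have "col (one_plus P) c = col (one_plus (P * inc n m)) c"
  proof (rule eq_vecI)
    fix x assume "x < dim_vec (col (one_plus (P * inc n m)) c)"
    moreover have "dim_row (P * inc n m) = n" using ci by blast
    ultimately have x: "x < n + 1" by (simp add: one_plus_def)
    show "col (one_plus P) c $ x = col (one_plus (P * inc n m)) c $ x"
      using x assms ci mult_inc_entry[OF P, of m "x - 1" "c - 1"]
      by (auto simp: one_plus_def col_def)
  qed (use ci P in \<open>simp add: one_plus_def\<close>)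
  moreover have "dim_col (one_plus P) = n + 1" "dim_col (one_plus (P * inc n m)) = m + 1"
    using ci P by (simp_all add: one_plus_def inc_def)
  moreover have "dim_row X = a" using X by blast
  ultimately show ?thesis using assms by (simp add: index_mult_mat)
qed

lemma inc_R_zero:
  assumes "R \<in> carrier_mat m k" "m \<le> r" "r < n" "c < k"
  shows "(inc n m * R) $$ (r, c) = 0"
  using assms by (simp add: inc_def scalar_prod_def)

theorem proposition3:
  fixes ns :: "nat list" and A Q R :: "nat \<Rightarrow> real mat"
  assumes "length ns \<ge> 2"
    and "A \<in> Param ns"
    and "qr_run ns A Q R"
  shows "act ns (grp_inv Q) A \<in> Param_int ns"
proof -
  define L where "L = depth ns"
  have L1: "L \<ge> 1" using assms(1) by (simp add: L_def depth_def)
  have Ac: "\<And>i. i \<in> {1..L} \<Longrightarrow> A i \<in> carrier_mat (ns ! i) (ns ! (i - 1) + 1)"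
    using assms(2) by (simp add: Param_def L_def)
  have Qo: "\<And>i. i \<in> {1..<L} \<Longrightarrow> Q i \<in> carrier_mat (ns ! i) (ns ! i) \<and> transpose_mat (Q i) * Q i = 1\<^sub>m (ns ! i)"
    using assms(3) by (simp add: qr_run_def orth_group_def L_def)
  have Rc: "\<And>i. i \<in> {1..<L} \<Longrightarrow> R i \<in> carrier_mat (nred ns i) (1 + nred ns (i - 1))
       \<and> qrM ns A Q i = Q i * inc (ns ! i) (nred ns i) * R i"
    using assms(3) by (simp add: qr_run_def L_def)
  let ?T = "act ns (grp_inv Q) A"
  have nred_le: "\<And>i. i < L \<Longrightarrow> nred ns i \<le> ns ! i"
  proof -
    fix i assume "i < L"
    then show "nred ns i \<le> ns ! i" by (cases i) (auto simp: nred_def L_def)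
  qed
  have dims: "?T i \<in> carrier_mat (ns ! i) (ns ! (i - 1) + 1)" if i: "i \<in> {1..L}" for i
  proof -
    have q1: "Qext ns (grp_inv Q) i \<in> carrier_mat (ns ! i) (ns ! i)"
      using i Qo[of i] by (auto simp: Qext_def grp_inv_def orth_inv_def L_def)
    have q2: "orth_inv (Qext ns (grp_inv Q) (i - 1)) \<in> carrier_mat (ns ! (i - 1)) (ns ! (i - 1))"
    proof (cases "i - 1 = 0")
      case False
      then have i1: "i - 1 \<in> {1..<L}" using i by auto
      then have "i - 1 \<noteq> depth ns" by (simp add: L_def)
      then have "orth_inv (Qext ns (grp_inv Q) (i - 1)) = Q (i - 1)"
        using False by (simp add: Qext_def grp_inv_def orth_inv_def)
      then show ?thesis using Qo[OF i1] by simp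
    qed (simp add: Qext_def orth_inv_def)
    show ?thesis using q1 q2 Ac[OF i] one_plus_carrier[of "orth_inv (Qext ns (grp_inv Q) (i - 1))"]
      by (auto simp: act_def)
  qed
  have zero: "?T i $$ (r, c) = 0"
    if i: "i \<in> {1..L}" and r: "nred ns i \<le> r" "r < ns ! i" and c: "c < 1 + nred ns (i - 1)" for i r c
  proof (cases "i = L")
    case True
    then show ?thesis using r by (simp add: nred_def L_def)
  next
    case False
    then have iL: "i \<in> {1..<L}" using i by auto
    have Qi: "Q i \<in> carrier_mat (ns ! i) (ns ! i)" "transpose_mat (Q i) * Q i = 1\<^sub>m (ns ! i)"
      using Qo[OF iL] by auto
    have Ri: "R i \<in> carrier_mat (nred ns i) (1 + nred ns (i - 1))"
      and Mi: "qrM ns A Q i = Q i * inc (ns ! i) (nred ns i) * R i" using Rc[OF iL] by auto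
    have Ai: "A i \<in> carrier_mat (ns ! i) (ns ! (i - 1) + 1)" using Ac i by auto
    have nl: "nred ns (i - 1) \<le> ns ! (i - 1)" using nred_le iL by auto
    have incc: "inc (ns ! i) (nred ns i) \<in> carrier_mat (ns ! i) (nred ns i)" by (simp add: inc_def)
    have key: "(transpose_mat (Q i) * qrM ns A Q i) $$ (r, c) = 0"
    proof -
      have "transpose_mat (Q i) * qrM ns A Q i = inc (ns ! i) (nred ns i) * R i"
      proof -
        have Qt: "transpose_mat (Q i) \<in> carrier_mat (ns ! i) (ns ! i)" using Qi(1) by simp
        have IR: "inc (ns ! i) (nred ns i) * R i \<in> carrier_mat (ns ! i) (1 + nred ns (i - 1))"
          using incc Ri by (rule mult_carrier_mat)
        have e1: "Q i * inc (ns ! i) (nred ns i) * R i = Q i * (inc (ns ! i) (nred ns i) * R i)"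
          by (rule assoc_mult_mat[OF Qi(1) incc Ri])
        have e2: "transpose_mat (Q i) * (Q i * (inc (ns ! i) (nred ns i) * R i))
            = (transpose_mat (Q i) * Q i) * (inc (ns ! i) (nred ns i) * R i)"
          by (rule assoc_mult_mat[OF Qt Qi(1) IR, symmetric])
        have e3: "1\<^sub>m (ns ! i) * (inc (ns ! i) (nred ns i) * R i) = inc (ns ! i) (nred ns i) * R i"
          using IR by (rule left_mult_one_mat)
        show ?thesis unfolding Mi e1 e2 Qi(2) e3 ..
      qed
      then show ?thesis using inc_R_zero[OF Ri r c] by simp
    qed
    have Tq: "?T i = transpose_mat (Q i) * A i * one_plus (orth_inv (Qext ns (grp_inv Q) (i - 1)))"
    proof -
      have "i \<noteq> depth ns" "i \<noteq> 0" using iL by (auto simp: L_def)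
      then show ?thesis by (simp add: act_def Qext_def grp_inv_def orth_inv_def)
    qed
    show ?thesis
    proof (cases "i = 1")
      case True
      have "?T i = transpose_mat (Q i) * A i"
        using Tq True Ai by (simp add: Qext_def orth_inv_def one_plus_one)
      then show ?thesis using key True by simp
    next
      case False
      then obtain k where k: "i = Suc (Suc k)" using iL
        by (metis atLeastLessThan_iff not0_implies_Suc not_one_le_zero One_nat_def)
      have i1: "i - 1 \<in> {1..<L}" using k iL by auto
      have Qp: "Q (i - 1) \<in> carrier_mat (ns ! (i - 1)) (ns ! (i - 1))" using Qo[OF i1] by auto
      have Tq2: "?T i = transpose_mat (Q i) * A i * one_plus (Q (i - 1))"
        using Tq i1 k by (simp add: Qext_def grp_inv_def orth_inv_def L_def)
      have M2: "qrM ns A Q i = A i * one_plus (Q (i - 1) * inc (ns ! (i - 1)) (nred ns (i - 1)))"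
        using k by (simp add: numeral_2_eq_2)
      have X: "transpose_mat (Q i) * A i \<in> carrier_mat (ns ! i) (ns ! (i - 1) + 1)"
        using Qi Ai by simp
      have "?T i $$ (r, c) = (transpose_mat (Q i) * A i * one_plus (Q (i - 1) * inc (ns ! (i - 1)) (nred ns (i - 1)))) $$ (r, c)"
        using one_plus_inc_entry[OF X Qp nl] r c Tq2 by simp
      also have "\<dots> = (transpose_mat (Q i) * qrM ns A Q i) $$ (r, c)"
      proof -
        have oc: "one_plus (Q (i - 1) * inc (ns ! (i - 1)) (nred ns (i - 1))) \<in> carrier_mat (ns ! (i - 1) + 1) (nred ns (i - 1) + 1)"
          using one_plus_carrier[of "Q (i - 1) * inc (ns ! (i - 1)) (nred ns (i - 1))"] Qp
          by (simp add: inc_def)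
        show ?thesis using M2 Qi Ai oc
          by (metis assoc_mult_mat transpose_carrier_mat)
      qed
      finally show ?thesis using key by simp
    qed
  qed
  show ?thesis
    unfolding Param_int_def Param_def
    using dims zero by (auto simp: L_def)
qed

end
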